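(* Let $T_l$ be a $2m$ deck-shuffler IET. Then $H_l$ is non-decreasing and has only finitely many plateaus, i.e. there are only finitely many $z\in[0,1)$ for which $H_l^{-1}(\{z\})$ is an interval of positive length.
   Context: A $2m$ deck-shuffler IET $T_l$ is the map $[0,1)\to[0,1)$ determined by a length vector $l$ giving a partition of $[0,1)$ into consecutive left-closed right-open intervals $A_1<\dots<A_m<B_1<\dots<B_m$ of positive lengths, with $T_l(x)=x+|B_1|+\dots+|B_i|$ for $x\in A_i$ and $T_l(x)=x-|A_i|-\dots-|A_m|$ for $x\in B_i$. $B=B_1\cup\dots\cup B_m$ and $H_l(x)=\sum_{n=0}^\infty \chi_B(T_l^n x)/2^{n+1}$. *)

theory Defs
  imports "HOL-Analysis.Analysis"
begin

text \<open>A 2m deck-shuffler IET with lengths a 0, ..., a (m-1) of A_1..A_m and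
  b 0, ..., b (m-1) of B_1..B_m (indices shifted to start at 0).\<close>

definition ds_A :: "(nat \<Rightarrow> real) \<Rightarrow> nat \<Rightarrow> real set" where
  "ds_A a i = {(\<Sum>j<i. a j) ..< (\<Sum>j\<le>i. a j)}"

definition ds_B :: "nat \<Rightarrow> (nat \<Rightarrow> real) \<Rightarrow> (nat \<Rightarrow> real) \<Rightarrow> nat \<Rightarrow> real set" where
  "ds_B m a b i = {(\<Sum>j<m. a j) + (\<Sum>j<i. b j) ..< (\<Sum>j<m. a j) + (\<Sum>j\<le>i. b j)}"

definition ds_Bunion :: "nat \<Rightarrow> (nat \<Rightarrow> real) \<Rightarrow> (nat \<Rightarrow> real) \<Rightarrow> real set" where
  "ds_Bunion m a b = (\<Union>i<m. ds_B m a b i)"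

text \<open>T x = x + |B_1|+...+|B_i| on A_i, T x = x - |A_i| - ... - |A_m| on B_i
  (the intervals are pairwise disjoint, so at most one summand is nonzero).\<close>
definition ds_T :: "nat \<Rightarrow> (nat \<Rightarrow> real) \<Rightarrow> (nat \<Rightarrow> real) \<Rightarrow> real \<Rightarrow> real" where
  "ds_T m a b x = x + (\<Sum>i<m. indicator (ds_A a i) x * (\<Sum>j\<le>i. b j))
                    - (\<Sum>i<m. indicator (ds_B m a b i) x * (\<Sum>j\<in>{i..<m}. a j))"

definition ds_H :: "nat \<Rightarrow> (nat \<Rightarrow> real) \<Rightarrow> (nat \<Rightarrow> real) \<Rightarrow> real \<Rightarrow> real" where
  "ds_H m a b x = (\<Sum>n. indicator (ds_Bunion m a b) ((ds_T m a b ^^ n) x) / 2 ^ (n + 1))"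

end

theory Submission
  imports Defs
begin


locale dyn =
  fixes T :: "real \<Rightarrow> real" and Bs :: "real set" and H :: "real \<Rightarrow> real"
    and E :: "real set" and \<delta> :: real
  assumes T_X: "\<And>x. x \<in> {0..<1} \<Longrightarrow> T x \<in> {0..<1}"
  and T_inj: "inj_on T {0..<1}"
  and H_rec: "\<And>x. H x = (if x \<in> Bs then 1 else 0)/2 + H (T x)/2"
  and H_nn: "\<And>x. 0 \<le> H x" and H_le: "\<And>x. H x \<le> 1"
  and dpos: "\<delta> > 0"
  and B_down: "\<And>x. x \<in> {0..<1} \<Longrightarrow> x \<in> Bs \<Longrightarrow> T x \<le> x - \<delta>"
  and side_ord: "\<And>x y. x \<in> {0..<1} \<Longrightarrow> y \<in> {0..<1} \<Longrightarrow> x \<le> y \<Longrightarrow> x \<in> Bs \<Longrightarrow> y \<in> Bs"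
  and sig_mono: "\<And>x y. x \<in> {0..<1} \<Longrightarrow> y \<in> {0..<1} \<Longrightarrow> x \<le> y \<Longrightarrow> (x \<in> Bs \<longleftrightarrow> y \<in> Bs) \<Longrightarrow>
      T x - x \<le> T y - y \<and> (T x - x = T y - y \<or> T x - x + \<delta> \<le> T y - y)"
  and pieces: "\<And>x. x \<in> {0..<1} \<Longrightarrow> \<exists>e e'. e \<in> E \<and> e \<le> x \<and> x < e' \<and>
      (\<forall>u. e \<le> u \<and> u < e' \<longrightarrow> u \<in> {0..<1} \<and> (u \<in> Bs \<longleftrightarrow> x \<in> Bs) \<and> T u - u = T x - x)"
  and finE: "finite E"
  and H_dig: "\<And>x y. (\<forall>n. (T^^n) x \<in> Bs \<longleftrightarrow> (T^^n) y \<in> Bs) \<Longrightarrow> H x = H y"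
begin

abbreviation "X \<equiv> {0..<(1::real)}"

lemma Tpow_X: assumes "x \<in> X" shows "(T^^n) x \<in> X"
proof (induction n)
  case 0 show ?case using assms by simp
next
  case (Suc n) show ?case unfolding funpow.simps comp_def by (rule T_X[OF Suc])
qed

lemma H_one: "H v = 1 \<Longrightarrow> v \<in> Bs \<and> H (T v) = 1"
  using H_rec[of v] H_le[of "T v"] by (auto split: if_splits)

lemma H_lt1: assumes "x \<in> X" shows "H x < 1"
proof (rule ccontr)
  assume "\<not> H x < 1"
  then have h: "H x = 1" using H_le[of x] by linarith
  have "\<forall>n. H ((T^^n) x) = 1" 
  proof
    fix n show "H ((T^^n) x) = 1" by (induction n) (use h H_one in auto)
  qed
  then have inB: "\<And>n. (T^^n) x \<in> Bs" using H_one by blast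
  have le: "(T^^n) x \<le> x - real n * \<delta>" for n
  proof (induction n)
    case 0 then show ?case by simp
  next
    case (Suc n)
    have "T ((T^^n) x) \<le> (T^^n) x - \<delta>" using B_down[OF Tpow_X[OF assms] inB] .
    then show ?case using Suc by (simp add: algebra_simps)
  qed
  obtain n where "1 < real n * \<delta>" using ex_less_of_nat_mult[OF dpos] by blast
  then have "(T^^n) x < 0" using le[of n] assms by auto
  then show False using Tpow_X[OF assms, of n] by auto
qed

lemma H_A: assumes "x \<in> X" "x \<notin> Bs" shows "H x < 1/2"
proof -
  have "H (T x) < 1" using H_lt1[OF T_X[OF assms(1)]] .
  moreover have "H x = H (T x)/2" using H_rec[of x] assms(2) by simp
  ultimately show ?thesis by linarith
qed

lemma H_B: assumes "x \<in> Bs" shows "H x \<ge> 1/2"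
proof -
  have "H x = 1/2 + H (T x)/2" using H_rec[of x] assms by simp
  then show ?thesis using H_nn[of "T x"] by linarith
qed

lemma H_T: "H (T x) = 2 * H x - (if x \<in> Bs then 1 else 0)"
  using H_rec[of x] by simp

lemma same_side: assumes "x \<in> X" "y \<in> X" "H x = H y" shows "x \<in> Bs \<longleftrightarrow> y \<in> Bs"
proof
  assume "x \<in> Bs"
  show "y \<in> Bs"
  proof (rule ccontr)
    assume "y \<notin> Bs" then show False using H_A[OF assms(2)] H_B[OF \<open>x \<in> Bs\<close>] assms(3) by linarith
  qed
next
  assume "y \<in> Bs"
  show "x \<in> Bs"
  proof (rule ccontr)
    assume "x \<notin> Bs" then show False using H_A[OF assms(1)] H_B[OF \<open>y \<in> Bs\<close>] assms(3) by linarith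
  qed
qed

lemma H_eq_T: assumes "x \<in> X" "y \<in> X" "H x = H y" shows "H (T x) = H (T y)"
proof -
  have s: "x \<in> Bs \<longleftrightarrow> y \<in> Bs" using same_side[OF assms] .
  show ?thesis unfolding H_T using s assms(3) by simp
qed

lemma H_eq_pow: assumes "x \<in> X" "y \<in> X" "H x = H y" shows "H ((T^^n) x) = H ((T^^n) y)"
proof (induction n)
  case 0 then show ?case using assms by simp
next
  case (Suc n)
  have "H (T ((T^^n) x)) = H (T ((T^^n) y))"
    by (rule H_eq_T[OF Tpow_X[OF assms(1)] Tpow_X[OF assms(2)] Suc])
  then show ?case by simp
qed

lemma T_mono_side: assumes "x \<in> X" "y \<in> X" "x \<le> y" "x \<in> Bs \<longleftrightarrow> y \<in> Bs" shows "T y - T x \<ge> y - x"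
proof -
  have "T x - x \<le> T y - y" using sig_mono[OF assms] by blast
  then show ?thesis by linarith
qed

lemma H_mono: assumes "x \<in> X" "y \<in> X" "x \<le> y" shows "H x \<le> H y"
proof (rule ccontr)
  assume "\<not> H x \<le> H y"
  define g where "g = H x - H y"
  have g: "g > 0" using \<open>\<not> H x \<le> H y\<close> g_def by auto
  have "\<forall>n. (T^^n) x \<le> (T^^n) y \<and> H ((T^^n) x) - H ((T^^n) y) = 2^n * g"
  proof
    fix n show "(T^^n) x \<le> (T^^n) y \<and> H ((T^^n) x) - H ((T^^n) y) = 2^n * g"
    proof (induction n)
      case 0 then show ?case using assms g_def by simp
    next
      case (Suc n)
      define u where "u = (T^^n) x"
      define v where "v = (T^^n) y"
      have uX: "u \<in> X" and vX: "v \<in> X" using Tpow_X assms u_def v_def by auto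
      have uv: "u \<le> v" and Hd: "H u - H v = 2^n * g" using Suc u_def v_def by auto
      have "(2::real)^n * g > 0" using g by simp
      then have Hgt: "H u > H v" using Hd by linarith
      have side: "u \<in> Bs \<longleftrightarrow> v \<in> Bs"
      proof
        assume "u \<in> Bs" then show "v \<in> Bs" using side_ord[OF uX vX uv] by blast
      next
        assume "v \<in> Bs" 
        show "u \<in> Bs"
        proof (rule ccontr)
          assume "u \<notin> Bs"
          then show False using H_A[OF uX] H_B[OF \<open>v \<in> Bs\<close>] Hgt by linarith
        qed
      qed
      have "T u \<le> T v" using T_mono_side[OF uX vX uv side] uv by linarith
      moreover have "H (T u) - H (T v) = 2 * (H u - H v)" using H_T[of u] H_T[of v] side by auto
      ultimately show ?case using Hd u_def v_def by simp
    qed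
  qed
  moreover obtain n where n: "1/g < 2^n" using real_arch_pow[of 2 "1/g"] by auto
  moreover have "1 < 2^n * g" using n g by (simp add: field_simps)
  ultimately have "H ((T^^n) x) - H ((T^^n) y) > 1" by simp
  then show False using H_le[of "(T^^n) x"] H_nn[of "(T^^n) y"] by linarith
qed

lemma orbit_pair: assumes "x \<in> X" "y \<in> X" "x \<le> y" "H x = H y"
  shows "(T^^n) x \<le> (T^^n) y \<and> (T^^n) y - (T^^n) x \<ge> y - x"
proof (induction n)
  case 0 then show ?case using assms by simp
next
  case (Suc n)
  have uX: "(T^^n) x \<in> X" and vX: "(T^^n) y \<in> X" using Tpow_X assms by auto
  have "H ((T^^n) x) = H ((T^^n) y)" using H_eq_pow assms by auto
  then have side: "(T^^n) x \<in> Bs \<longleftrightarrow> (T^^n) y \<in> Bs" using same_side uX vX by blast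
  show ?case using T_mono_side[OF uX vX _ side] Suc by auto
qed


lemma comb: "(a::real) \<ge> 0 \<Longrightarrow> (a = 0 \<or> a \<ge> d) \<Longrightarrow> b \<ge> 0 \<Longrightarrow> (b = 0 \<or> b \<ge> d) \<Longrightarrow> d > 0
   \<Longrightarrow> a + b \<ge> 0 \<and> (a + b = 0 \<or> a + b \<ge> d)"
  by auto

lemma Delta: assumes "v \<in> X" "v' \<in> X" "v \<le> v'" "H v = H v'"
  shows "(T^^p) v' - (T^^p) v - (v' - v) \<ge> 0 \<and>
    ((T^^p) v' - (T^^p) v - (v' - v) = 0 \<or> (T^^p) v' - (T^^p) v - (v' - v) \<ge> \<delta>)"
proof (induction p)
  case 0 then show ?case by simp
next
  case (Suc p)
  define u where "u = (T^^p) v"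
  define u' where "u' = (T^^p) v'"
  have uX: "u \<in> X" and uX': "u' \<in> X" using Tpow_X assms u_def u'_def by auto
  have uu: "u \<le> u'" using orbit_pair[OF assms] u_def u'_def by blast
  have "H u = H u'" using H_eq_pow[OF assms(1,2,4)] u_def u'_def by blast
  then have side: "u \<in> Bs \<longleftrightarrow> u' \<in> Bs" using same_side uX uX' by blast
  have s: "T u - u \<le> T u' - u' \<and> (T u - u = T u' - u' \<or> T u - u + \<delta> \<le> T u' - u')"
    using sig_mono[OF uX uX' uu side] .
  have s2: "(T u' - u') - (T u - u) \<ge> 0 \<and> ((T u' - u') - (T u - u) = 0 \<or> (T u' - u') - (T u - u) \<ge> \<delta>)"
    using s by auto
  have e: "(T^^Suc p) v' - (T^^Suc p) v - (v' - v) = ((T^^p) v' - (T^^p) v - (v' - v)) + ((T u' - u') - (T u - u))"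
    using u_def u'_def by simp
  show ?case unfolding e by (rule comb[OF _ _ _ _ dpos]) (use Suc s2 in auto)
qed

lemma id_on_class: assumes uX: "u \<in> X" and per: "H ((T^^p) u) = H u"
  shows "\<forall>v \<in> {v \<in> X. H v = H u}. (T^^p) v = v"
proof -
  define Q where "Q = {v \<in> X. H v = H u}"
  have uQ: "u \<in> Q" using uX Q_def by simp
  have Qne: "Q \<noteq> {}" using uQ by blast
  have bb: "bdd_below Q" unfolding Q_def by (rule bdd_belowI[of _ 0]) auto
  have ba: "bdd_above Q" unfolding Q_def by (rule bdd_aboveI[of _ 1]) auto
  define l where "l = Inf Q"
  define r where "r = Sup Q"
  have lv: "v \<in> Q \<Longrightarrow> l \<le> v" for v using cInf_lower[OF _ bb] l_def by blast
  have vr: "v \<in> Q \<Longrightarrow> v \<le> r" for v using cSup_upper[OF _ ba] r_def by blast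
  have QX: "v \<in> Q \<Longrightarrow> v \<in> X" for v using Q_def by blast
  have TQ: "v \<in> Q \<Longrightarrow> (T^^p) v \<in> Q" for v
  proof -
    assume vQ: "v \<in> Q"
    have "H ((T^^p) v) = H ((T^^p) u)" using H_eq_pow[OF QX[OF vQ] uX] vQ Q_def by blast
    then show ?thesis using per Tpow_X[OF QX[OF vQ]] Q_def by simp
  qed
  have claim1: "(T^^p) v' - (T^^p) v = v' - v" if vQ: "v \<in> Q" and vQ': "v' \<in> Q" and vv: "v \<le> v'" for v v'
  proof (rule ccontr)
    assume ne: "(T^^p) v' - (T^^p) v \<noteq> v' - v"
    have Hvv: "H v = H v'" using vQ vQ' Q_def by simp
    have D: "(T^^p) v' - (T^^p) v - (v' - v) \<ge> \<delta>" using Delta[OF QX[OF vQ] QX[OF vQ'] vv Hvv, of p] ne by auto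
    obtain w0 where w0: "w0 \<in> Q" "w0 < l + \<delta>/2" using cInf_less_iff[OF Qne bb, of "l + \<delta>/2"] l_def dpos by auto
    obtain w1 where w1: "w1 \<in> Q" "r - \<delta>/2 < w1" using less_cSup_iff[OF Qne ba, of "r - \<delta>/2"] r_def dpos by auto
    define a0 where "a0 = min w0 v"
    define a1 where "a1 = max w1 v'"
    have a0Q: "a0 \<in> Q" using w0 vQ a0_def by (cases "w0 \<le> v") (auto simp: min_def)
    have a1Q: "a1 \<in> Q" using w1 vQ' a1_def by (cases "w1 \<le> v'") (auto simp: max_def)
    have H0: "H a0 = H v" using a0Q vQ Q_def by simp
    have H1: "H v' = H a1" using a1Q vQ' Q_def by simp
    have D0: "(T^^p) v - (T^^p) a0 - (v - a0) \<ge> 0" using Delta[OF QX[OF a0Q] QX[OF vQ] _ H0, of p] a0_def by auto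
    have D1: "(T^^p) a1 - (T^^p) v' - (a1 - v') \<ge> 0" using Delta[OF QX[OF vQ'] QX[OF a1Q] _ H1, of p] a1_def by auto
    have "(T^^p) a1 - (T^^p) a0 \<ge> a1 - a0 + \<delta>" using D D0 D1 by linarith
    moreover have "a1 > r - \<delta>/2" using w1 a1_def by auto
    moreover have "a0 < l + \<delta>/2" using w0 a0_def by auto
    moreover have "(T^^p) a1 \<le> r" using vr[OF TQ[OF a1Q]] .
    moreover have "(T^^p) a0 \<ge> l" using lv[OF TQ[OF a0Q]] .
    ultimately show False by linarith
  qed
  define t where "t = (T^^p) u - u"
  have tv: "(T^^p) v = v + t" if vQ: "v \<in> Q" for v
  proof (cases "v \<le> u")
    case True then show ?thesis using claim1[OF vQ uQ] t_def by linarith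
  next
    case False then show ?thesis using claim1[OF uQ vQ] t_def by linarith
  qed
  have t0: "t = 0"
  proof (rule ccontr)
    assume "t \<noteq> 0"
    then consider "t > 0" | "t < 0" by linarith
    then show False
    proof cases
      case 1
      obtain w where w: "w \<in> Q" "r - t < w" using less_cSup_iff[OF Qne ba, of "r - t"] r_def 1 by auto
      then show False using vr[OF TQ[OF w(1)]] tv[OF w(1)] by linarith
    next
      case 2
      obtain w where w: "w \<in> Q" "w < l - t" using cInf_less_iff[OF Qne bb, of "l - t"] l_def 2 by auto
      then show False using lv[OF TQ[OF w(1)]] tv[OF w(1)] by linarith
    qed
  qed
  show ?thesis using tv t0 Q_def by simp
qed

lemma Tpow_inj: "inj_on (T^^n) X"
proof (induction n)
  case 0 then show ?case by simp
next
  case (Suc n)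
  have "(T^^n) ` X \<subseteq> X" using Tpow_X by blast
  then have "inj_on T ((T^^n) ` X)" using T_inj inj_on_subset by blast
  then have "inj_on (T \<circ> (T^^n)) X" by (rule comp_inj_on[OF Suc])
  then show ?case by (simp only: funpow.simps)
qed

lemma periodic: assumes xX: "x \<in> X" and yX: "y \<in> X" and xy: "x < y" and Hxy: "H x = H y"
  shows "\<exists>p>0. (T^^p) x = x"
proof -
  define d where "d = y - x"
  have d0: "d > 0" using xy d_def by simp
  define K where "K = nat \<lceil>1/d\<rceil>"
  have K1: "real K \<ge> 1/d" using K_def by linarith
  have Kpos: "real K > 0" using K1 d0 by (smt (verit) divide_pos_pos)
  have Kd: "1 / real K \<le> d" using K1 d0 Kpos by (simp add: field_simps)
  define q where "q n = nat \<lceil>real K * (T^^n) x\<rceil>" for n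
  have qK: "q n \<le> K" and qH: "H ((T^^n) x) = H (real (q n) / real K)" for n
  proof -
    define z where "z = (T^^n) x"
    define z' where "z' = (T^^n) y"
    have zX: "z \<in> X" and zX': "z' \<in> X" using Tpow_X xX yX z_def z'_def by auto
    have op: "z \<le> z' \<and> z' - z \<ge> d" using orbit_pair[OF xX yX _ Hxy, of n] xy z_def z'_def d_def by auto
    have Hz: "H z = H z'" using H_eq_pow[OF xX yX Hxy] z_def z'_def by simp
    have "real K * z < real K" using zX Kpos by simp
    then have c1: "\<lceil>real K * z\<rceil> \<le> int K" by (simp add: ceiling_le_iff)
    have "q n = nat \<lceil>real K * z\<rceil>" using q_def z_def by simp
    then show "q n \<le> K" using c1 by (simp add: nat_le_iff)
    have "real K * z \<ge> 0" using zX Kpos by simp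
    then have c0: "\<lceil>real K * z\<rceil> \<ge> 0" by linarith
    have rq: "real (q n) = real_of_int \<lceil>real K * z\<rceil>" using q_def z_def c0 by simp
    define g where "g = real (q n) / real K"
    have "real K * z \<le> real (q n)" using rq by linarith
    then have "(real K * z) / real K \<le> real (q n) / real K" by (rule divide_right_mono) (use Kpos in simp)
    then have gz: "z \<le> g" using g_def Kpos by simp
    have "real (q n) < real K * z + 1" using rq by linarith
    then have "real (q n) / real K < (real K * z + 1) / real K" by (rule divide_strict_right_mono) (use Kpos in simp)
    then have "g < z + 1 / real K" using g_def Kpos by (simp add: add_divide_distrib)
    then have gz': "g < z'" using Kd op by linarith
    have gX: "g \<in> X" using gz gz' zX zX' by auto
    have "H z \<le> H g" using H_mono[OF zX gX gz] .
    moreover have "H g \<le> H z'" using H_mono[OF gX zX'] gz' by simp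
    ultimately show "H ((T^^n) x) = H (real (q n) / real K)" using Hz z_def g_def by simp
  qed
  have "\<not> inj_on q {..K+1}"
  proof (rule pigeonhole)
    have "q ` {..K+1} \<subseteq> {..K}" using qK by auto
    then have "card (q ` {..K+1}) \<le> card {..K}" by (intro card_mono) auto
    then show "card (q ` {..K+1}) < card {..K+1}" by simp
  qed
  then obtain i j where ij: "i \<noteq> j" "q i = q j" unfolding inj_on_def by blast
  have "\<exists>i j. i < j \<and> H ((T^^i) x) = H ((T^^j) x)"
  proof (cases "i < j")
    case True then show ?thesis using ij qH by metis
  next
    case False then have "j < i" using ij by simp
    then show ?thesis using ij qH by metis
  qed
  then obtain i j where ij: "i < j" "H ((T^^i) x) = H ((T^^j) x)" by blast
  define u where "u = (T^^i) x"
  define p where "p = j - i"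
  have uX: "u \<in> X" using Tpow_X xX u_def by simp
  have Tpu: "(T^^p) u = (T^^j) x" using ij p_def u_def funpow_add[of p i T]
    by (metis add.commute comp_apply le_add_diff_inverse less_imp_le)
  have "H ((T^^p) u) = H u" using Tpu ij u_def by simp
  then have "(T^^p) u = u" using id_on_class[OF uX] uX by blast
  then have "(T^^i) ((T^^p) x) = (T^^i) x" using Tpu u_def funpow_add[of p i T] funpow_add[of i p T]
    by (metis add.commute comp_apply)
  then have "(T^^p) x = x" using inj_onD[OF Tpow_inj[of i]] Tpow_X[OF xX] xX by blast
  moreover have "p > 0" using ij p_def by simp
  ultimately show ?thesis by blast
qed

lemma per_id: assumes "x \<in> X" "(T^^p) x = x" "v \<in> X" "H v = H x" shows "(T^^p) v = v"
  using id_on_class[OF assms(1), of p] assms by simp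

lemma periodic2: assumes xX: "x \<in> X" and yX: "y \<in> X" and xy: "x \<noteq> y" and Hxy: "H x = H y"
  shows "\<exists>p>0. (T^^p) x = x"
proof (cases "x < y")
  case True then show ?thesis using periodic[OF xX yX True Hxy] by blast
next
  case False then have "y < x" using xy by simp
  then obtain p where p: "p > 0" "(T^^p) y = y" using periodic[OF yX xX _ Hxy[symmetric]] by blast
  then have "(T^^p) x = x" using per_id[OF yX p(2) xX Hxy] by simp
  then show ?thesis using p by blast
qed

lemma sig_const: assumes xX: "x \<in> X" and p0: "p > 0" and per: "(T^^p) x = x"
  and vX: "v \<in> X" and vX': "v' \<in> X" and Hv: "H v = H x" and Hv': "H v' = H x"
  shows "T v - v = T v' - v'"
proof -
  have main: "T a - a = T b - b" if aX: "a \<in> X" and bX: "b \<in> X" and ab: "a \<le> b" and Ha: "H a = H x" and Hb: "H b = H x" for a b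
  proof -
    obtain q where q: "p = Suc q" using p0 gr0_implies_Suc by blast
    have pa: "(T^^p) a = a" using per_id[OF xX per aX Ha] .
    have pb: "(T^^p) b = b" using per_id[OF xX per bX Hb] .
    have Hab: "H a = H b" using Ha Hb by simp
    have o1: "T a \<le> T b" using orbit_pair[OF aX bX ab Hab, of 1] by simp
    have H1: "H (T a) = H (T b)" using H_eq_T[OF aX bX Hab] .
    have D: "(T^^q) (T b) - (T^^q) (T a) - (T b - T a) \<ge> 0"
      using Delta[OF T_X[OF aX] T_X[OF bX] o1 H1, of q] by blast
    have "(T^^q) (T a) = a" using pa q by (simp add: funpow_Suc_right del: funpow.simps)
    moreover have "(T^^q) (T b) = b" using pb q by (simp add: funpow_Suc_right del: funpow.simps)
    ultimately have "b - a - (T b - T a) \<ge> 0" using D by simp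
    moreover have "T a - a \<le> T b - b" using sig_mono[OF aX bX ab] same_side[OF aX bX Hab] by blast
    ultimately show ?thesis by linarith
  qed
  show ?thesis
  proof (cases "v \<le> v'")
    case True then show ?thesis using main[OF vX vX' True Hv Hv'] by simp
  next
    case False then show ?thesis using main[OF vX' vX _ Hv' Hv] by simp
  qed
qed

lemma inf_in_E: assumes xX: "x \<in> X" and yX: "y \<in> X" and xy: "x \<noteq> y" and Hxy: "H x = H y"
  shows "\<exists>p>0. (T^^p) x = x \<and> (\<exists>k<p. Inf {v \<in> X. H v = H ((T^^k) x)} \<in> E)"
proof -
  obtain p where p0: "p > 0" and per: "(T^^p) x = x" using periodic2[OF assms] by blast
  define yk where "yk k = (T^^k) x" for k
  define Cs where "Cs k = {v \<in> X. H v = H (yk k)}" for k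
  define l where "l k = Inf (Cs k)" for k
  define s where "s k = T (yk k) - yk k" for k
  have ykX: "yk k \<in> X" for k using Tpow_X[OF xX] yk_def by simp
  have ykper: "(T^^p) (yk k) = yk k" for k
  proof -
    have "(T^^p) ((T^^k) x) = (T^^(p+k)) x" by (simp only: funpow_add comp_apply)
    also have "\<dots> = (T^^(k+p)) x" by (simp only: add.commute)
    also have "\<dots> = (T^^k) ((T^^p) x)" by (simp only: funpow_add comp_apply)
    finally show ?thesis using per yk_def by simp
  qed
  have ykmod: "yk k = yk (k mod p)" for k using funpow_mod_eq[OF per, of k] yk_def by simp
  have lmod: "l k = l (k mod p)" for k using ykmod[of k] by (simp add: l_def Cs_def)
  have smod: "s k = s (k mod p)" for k using ykmod[of k] by (simp add: s_def)
  have Cne: "yk k \<in> Cs k" for k using ykX Cs_def by simp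
  have bb: "bdd_below (Cs k)" for k unfolding Cs_def by (rule bdd_belowI[of _ 0]) auto
  have lle: "l k \<le> v" if "v \<in> Cs k" for k v unfolding l_def by (rule cInf_lower[OF that bb])
  have lX: "l k \<in> X" for k
  proof -
    have "l k \<ge> 0" unfolding l_def by (rule cInf_greatest) (use Cne Cs_def in auto)
    moreover have "l k \<le> yk k" using lle[OF Cne] .
    ultimately show ?thesis using ykX[of k] by auto
  qed
  have CsX: "v \<in> Cs k \<Longrightarrow> v \<in> X" for v k using Cs_def by blast
  have Tshift: "T v = v + s k" if vC: "v \<in> Cs k" for v k
    using sig_const[OF ykX[of k] p0 ykper[of k] CsX[OF vC] ykX[of k]] vC Cs_def s_def by simp
  have lSuc: "l (Suc k) = l k + s k" for k
  proof (rule antisym)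
    have "l (Suc k) - s k \<le> l k" unfolding l_def
    proof (rule cInf_greatest)
      show "Cs k \<noteq> {}" using Cne by blast
    next
      fix v assume vC: "v \<in> Cs k"
      have "T v \<in> Cs (Suc k)" using H_eq_T[OF CsX[OF vC] ykX[of k]] vC T_X[OF CsX[OF vC]] Cs_def yk_def by simp
      then have "l (Suc k) \<le> T v" using lle by blast
      then show "Inf (Cs (Suc k)) - s k \<le> v" using Tshift[OF vC] l_def by simp
    qed
    then show "l (Suc k) \<le> l k + s k" by simp
  next
    show "l k + s k \<le> l (Suc k)" unfolding l_def
    proof (rule cInf_greatest)
      show "Cs (Suc k) \<noteq> {}" using Cne by blast
    next
      fix w assume wC: "w \<in> Cs (Suc k)"
      define v where "v = (T^^(p - 1)) w"
      have wX: "w \<in> X" using CsX[OF wC] .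
      have "(T^^(p-1)) (yk (Suc k)) = (T^^(p-1+Suc k)) x" unfolding yk_def by (simp only: funpow_add comp_apply)
      also have "p-1+Suc k = k + p" using p0 by simp
      also have "(T^^(k+p)) x = (T^^k) ((T^^p) x)" by (simp only: funpow_add comp_apply)
      finally have "(T^^(p-1)) (yk (Suc k)) = yk k" using per yk_def by simp
      moreover have "H v = H ((T^^(p-1)) (yk (Suc k)))" using H_eq_pow[OF wX ykX] wC Cs_def v_def by simp
      ultimately have vC: "v \<in> Cs k" using Tpow_X[OF wX] v_def Cs_def by simp
      have "T v = (T^^(Suc (p-1))) w" using v_def by simp
      then have "T v = (T^^p) w" using p0 by simp
      also have "\<dots> = w" using per_id[OF ykX[of "Suc k"] ykper wX] wC Cs_def by simp
      finally have "w = v + s k" using Tshift[OF vC] by simp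
      then show "Inf (Cs k) + s k \<le> w" using lle[OF vC] l_def by simp
    qed
  qed
  show ?thesis
  proof (rule ccontr)
    assume "\<not> ?thesis"
    note nt = this
    have notE: "l k \<notin> E" if kp: "k < p" for k
    proof
      assume "l k \<in> E"
      then have "Inf {v \<in> X. H v = H ((T^^k) x)} \<in> E" using l_def Cs_def yk_def by simp
      then show False using nt p0 per kp by blast
    qed
    have "\<forall>k. \<exists>e e'. e \<in> E \<and> e \<le> l k \<and> l k < e' \<and>
      (\<forall>u. e \<le> u \<and> u < e' \<longrightarrow> u \<in> X \<and> (u \<in> Bs \<longleftrightarrow> l k \<in> Bs) \<and> T u - u = T (l k) - l k)"
      using pieces[OF lX] by blast
    then obtain ee ee' where pc: "\<And>k. ee k \<in> E \<and> ee k \<le> l k \<and> l k < ee' k \<and>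
      (\<forall>u. ee k \<le> u \<and> u < ee' k \<longrightarrow> u \<in> X \<and> (u \<in> Bs \<longleftrightarrow> l k \<in> Bs) \<and> T u - u = T (l k) - l k)"
      by metis
    define \<epsilon> where "\<epsilon> = Min ((\<lambda>k. l k - ee k) ` {..<p})"
    have fin: "finite ((\<lambda>k. l k - ee k) ` {..<p})" by simp
    have nemp: "(\<lambda>k. l k - ee k) ` {..<p} \<noteq> {}" using p0 by auto
    have epos: "\<epsilon> > 0" unfolding \<epsilon>_def
    proof (subst Min_gr_iff[OF fin nemp], intro ballI)
      fix t assume "t \<in> (\<lambda>k. l k - ee k) ` {..<p}"
      then obtain k where k: "k < p" "t = l k - ee k" by blast
      have eE: "ee k \<in> E" and ele: "ee k \<le> l k" using pc[of k] by blast+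
      have "ee k \<noteq> l k" using notE[OF k(1)] eE by auto
      then show "0 < t" using ele k(2) by linarith
    qed
    have ele: "\<epsilon> \<le> l k - ee (k mod p)" for k
    proof -
      have km: "k mod p \<in> {..<p}" using p0 by simp
      have "\<epsilon> \<le> l (k mod p) - ee (k mod p)" unfolding \<epsilon>_def by (rule Min_le[OF fin imageI[OF km]])
      then show ?thesis using lmod[of k] by simp
    qed
    have piece_k: "T u - u = s k \<and> (u \<in> Bs \<longleftrightarrow> yk k \<in> Bs) \<and> u \<in> X"
      if "ee (k mod p) \<le> u" "u < ee' (k mod p)" for u k
    proof -
      define k' where "k' = k mod p"
      have lk: "l k = l k'" using lmod k'_def by simp
      have "l k' < ee' k'" using pc[of k'] by blast
      then have "Inf (Cs k') < ee' k'" using l_def by simp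
      moreover have "Cs k' \<noteq> {}" using Cne[of k'] by blast
      ultimately have "\<exists>v\<in>Cs k'. v < ee' k'" using cInf_less_iff[OF _ bb[of k']] by blast
      then obtain v where vC: "v \<in> Cs k'" and v1: "v < ee' k'" by blast
      have "ee k' \<le> l k'" using pc[of k'] by blast
      then have v0: "ee k' \<le> v" using lle[OF vC] by linarith
      have pck: "\<forall>u. ee k' \<le> u \<and> u < ee' k' \<longrightarrow> u \<in> X \<and> (u \<in> Bs \<longleftrightarrow> l k' \<in> Bs) \<and> T u - u = T (l k') - l k'"
        using pc[of k'] by blast
      have th: "ee k' \<le> u" "u < ee' k'" using that k'_def by simp_all
      have pv1: "v \<in> Bs \<longleftrightarrow> l k' \<in> Bs" and pv2: "T v - v = T (l k') - l k'"
        using pck v0 v1 by blast+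
      have pu0: "u \<in> X" and pu1: "u \<in> Bs \<longleftrightarrow> l k' \<in> Bs" and pu2: "T u - u = T (l k') - l k'"
        using pck th by blast+
      have sv: "T v - v = s k'" using Tshift[OF vC] by simp
      have vX: "v \<in> X" using CsX[OF vC] .
      have Hv: "H v = H (yk k')" using vC Cs_def by simp
      have sidev: "v \<in> Bs \<longleftrightarrow> yk k' \<in> Bs" using same_side[OF vX ykX[of k'] Hv] .
      have e1: "s k = s k'" using smod[of k] k'_def by simp
      have e2: "yk k = yk k'" using ykmod[of k] k'_def by simp
      have r1: "T u - u = s k" using pu2 pv2 sv e1 by linarith
      have r2: "u \<in> Bs \<longleftrightarrow> yk k \<in> Bs" using pu1 pv1 sidev e2 by simp
      show ?thesis using r1 r2 pu0 by blast
    qed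
    define x' where "x' = l 0 - \<epsilon>/2"
    have orb: "(T^^k) x' = l k - \<epsilon>/2" for k
    proof (induction k)
      case 0 then show ?case using x'_def by simp
    next
      case (Suc k)
      define u where "u = l k - \<epsilon>/2"
      have "ee (k mod p) \<le> u" using ele[of k] epos u_def by linarith
      moreover have "u < ee' (k mod p)" using pc[of "k mod p"] lmod[of k] epos u_def by linarith
      ultimately have "T u - u = s k" using piece_k by blast
      then show ?case using Suc u_def lSuc[of k] by simp
    qed
    have sides: "(T^^n) x' \<in> Bs \<longleftrightarrow> (T^^n) x \<in> Bs" for n
    proof -
      have "ee (n mod p) \<le> l n - \<epsilon>/2" using ele[of n] epos by linarith
      moreover have "l n - \<epsilon>/2 < ee' (n mod p)" using pc[of "n mod p"] lmod[of n] epos by linarith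
      ultimately show ?thesis using piece_k orb[of n] yk_def by simp
    qed
    have x'X: "x' \<in> X"
    proof -
      have "ee (0 mod p) \<le> l 0 - \<epsilon>/2" using ele[of 0] epos by linarith
      moreover have "l 0 - \<epsilon>/2 < ee' (0 mod p)" using pc[of "0 mod p"] lmod[of 0] epos by linarith
      ultimately show ?thesis using piece_k x'_def by blast
    qed
    have "H x' = H x" using H_dig sides by blast
    then have "x' \<in> Cs 0" using x'X Cs_def yk_def by simp
    then have "l 0 \<le> x'" using lle by blast
    then show False using x'_def epos by simp
  qed
qed

lemma inf_strict: assumes uX: "u \<in> X" and vX: "v \<in> X" and vu: "v \<noteq> u" and Hvu: "H v = H u"
  and wX: "w \<in> X" and Huw: "H u < H w"
  shows "Inf {t\<in>X. H t = H u} < Inf {t \<in> X. H t = H w}"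
proof -
  define v1 where "v1 = min u v"
  define v2 where "v2 = max u v"
  have v12: "v1 < v2" using vu v1_def v2_def by auto
  have v1C: "v1 \<in> {t\<in>X. H t = H u}" using uX vX Hvu v1_def by (auto simp: min_def)
  have v2C: "v2 \<in> {t\<in>X. H t = H u}" using uX vX Hvu v2_def by (auto simp: max_def)
  have bb: "bdd_below {t\<in>X. H t = H u}" by (rule bdd_belowI[of _ 0]) auto
  have "Inf {t\<in>X. H t = H u} \<le> v1" by (rule cInf_lower[OF v1C bb])
  moreover have "v2 \<le> Inf {t \<in> X. H t = H w}"
  proof (rule cInf_greatest)
    show "{t \<in> X. H t = H w} \<noteq> {}" using wX by blast
  next
    fix t assume tC: "t \<in> {t \<in> X. H t = H w}"
    show "v2 \<le> t"
    proof (rule ccontr)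
      assume "\<not> v2 \<le> t"
      then have "H t \<le> H v2" using H_mono[of t v2] tC v2C by auto
      then show False using tC v2C Huw by simp
    qed
  qed
  ultimately show ?thesis using v12 by linarith
qed

theorem abs_main: "mono_on {0..<1} H \<and> finite {z \<in> {0..<1::real}.
          is_interval ({x \<in> {0..<1}. H x = z})
          \<and> (\<exists>x y. x \<in> {0..<1} \<and> y \<in> {0..<1} \<and> x < y
                   \<and> H x = z \<and> H y = z)}"
proof
  show "mono_on {0..<1} H" by (rule mono_onI) (rule H_mono)
next
  define ntv where "ntv u \<longleftrightarrow> u \<in> X \<and> (\<exists>v\<in>X. v \<noteq> u \<and> H v = H u)" for u
  define U where "U e = (SOME u. ntv u \<and> Inf {t\<in>X. H t = H u} = e)" for e
  define P where "P e = (SOME p. p > 0 \<and> (T^^p) (U e) = U e)" for e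
  define F where "F e = (\<lambda>n. H ((T^^n) (U e))) ` {..<P e}" for e
  have fin: "finite (\<Union>e\<in>E. F e)" using finE F_def by simp
  have sub: "{z \<in> {0..<1::real}. is_interval ({x \<in> {0..<1}. H x = z})
          \<and> (\<exists>x y. x \<in> {0..<1} \<and> y \<in> {0..<1} \<and> x < y \<and> H x = z \<and> H y = z)} \<subseteq> (\<Union>e\<in>E. F e)"
  proof
    fix z assume "z \<in> {z \<in> {0..<1::real}. is_interval ({x \<in> {0..<1}. H x = z})
          \<and> (\<exists>x y. x \<in> {0..<1} \<and> y \<in> {0..<1} \<and> x < y \<and> H x = z \<and> H y = z)}"
    then obtain x y where xX: "x \<in> X" and yX: "y \<in> X" and xy: "x < y" and Hx: "H x = z" and Hy: "H y = z" by blast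
    have Hxy: "H x = H y" using Hx Hy by simp
    obtain p where p0: "p > 0" and per: "(T^^p) x = x" and
      ex: "\<exists>k<p. Inf {v \<in> X. H v = H ((T^^k) x)} \<in> E"
      using inf_in_E[OF xX yX _ Hxy] xy by auto
    then obtain k where kp: "k < p" and eE: "Inf {v \<in> X. H v = H ((T^^k) x)} \<in> E" by blast
    define e where "e = Inf {v \<in> X. H v = H ((T^^k) x)}"
    define w where "w = (T^^k) x"
    define w' where "w' = (T^^k) y"
    have wX: "w \<in> X" and wX': "w' \<in> X" using Tpow_X xX yX w_def w'_def by auto
    have "w' - w \<ge> y - x" using orbit_pair[OF xX yX _ Hxy, of k] xy w_def w'_def by auto
    then have ww: "w' \<noteq> w" using xy by auto
    have Hww: "H w' = H w" using H_eq_pow[OF xX yX Hxy, of k] w_def w'_def by simp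
    have ntw: "ntv w" using ntv_def wX wX' ww Hww by blast
    have "\<exists>u. ntv u \<and> Inf {t\<in>X. H t = H u} = e" using ntw e_def w_def by blast
    then have Ue: "ntv (U e) \<and> Inf {t\<in>X. H t = H (U e)} = e" unfolding U_def by (rule someI_ex)
    then obtain v where UX: "U e \<in> X" and vX: "v \<in> X" and vU: "v \<noteq> U e" and HvU: "H v = H (U e)"
      using ntv_def by blast
    have "\<exists>p>0. (T^^p) (U e) = U e" using periodic2[OF vX UX vU HvU] per_id[OF vX _ UX HvU[symmetric]] by blast
    then have Pe: "P e > 0 \<and> (T^^(P e)) (U e) = U e" unfolding P_def by (rule someI_ex)
    have HwU: "H w = H (U e)"
    proof (rule ccontr)
      assume ne: "H w \<noteq> H (U e)"
      have Iw: "Inf {t\<in>X. H t = H w} = e" using e_def w_def by simp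
      have IU: "Inf {t\<in>X. H t = H (U e)} = e" using Ue by blast
      show False
      proof (cases "H w < H (U e)")
        case True
        show False using inf_strict[OF wX wX' ww Hww UX True] Iw IU by simp
      next
        case False
        then have "H (U e) < H w" using ne by simp
        then show False using inf_strict[OF UX vX vU HvU wX] Iw IU by simp
      qed
    qed
    have "(T^^(p-k)) w = (T^^(p-k+k)) x" unfolding w_def by (simp only: funpow_add comp_apply)
    then have xw: "(T^^(p-k)) w = x" using kp per by simp
    have "z = H ((T^^(p-k)) w)" using xw Hx by simp
    also have "\<dots> = H ((T^^(p-k)) (U e))" using H_eq_pow[OF wX UX HwU] .
    also have "\<dots> = H ((T^^((p-k) mod P e)) (U e))" using funpow_mod_eq[of "P e" T "U e" "p-k"] Pe by simp
    finally have "z = H ((T^^((p-k) mod P e)) (U e))" .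
    moreover have "(p-k) mod P e \<in> {..<P e}" using Pe by simp
    ultimately have "z \<in> F e" unfolding F_def by blast
    then show "z \<in> (\<Union>e\<in>E. F e)" using eE e_def by blast
  qed
  show "finite {z \<in> {0..<1::real}. is_interval ({x \<in> {0..<1}. H x = z})
          \<and> (\<exists>x y. x \<in> {0..<1} \<and> y \<in> {0..<1} \<and> x < y \<and> H x = z \<and> H y = z)}"
    by (rule finite_subset[OF sub fin])
qed
end


lemma geo_half: "summable (\<lambda>n::nat. (1/2::real)^n / 2) \<and> (\<Sum>n. (1/2::real)^n / 2) = 1"
proof -
  have s: "summable (\<lambda>n::nat. (1/2::real)^n)" by (rule summable_geometric) simp
  have "(\<Sum>n. (1/2::real)^n) = 2" using suminf_geometric[of "1/2::real"] by simp
  then show ?thesis using summable_divide[OF s, of 2] suminf_divide[OF s, of 2] by simp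
qed

lemma ser_facts:
  fixes T :: "real \<Rightarrow> real" and Bs :: "real set"
  defines "f \<equiv> \<lambda>x n. indicator Bs ((T^^n) x) / 2 ^ (n + 1) :: real"
  shows "summable (f x)" and "0 \<le> suminf (f x)" and "suminf (f x) \<le> 1"
    and "suminf (f x) = (if x \<in> Bs then 1 else 0)/2 + suminf (f (T x))/2"
proof -
  have b: "norm (f y n) \<le> (1/2)^n / 2" for y n
    unfolding f_def by (simp add: indicator_def power_divide)
  have nn: "0 \<le> f y n" for y n unfolding f_def by simp
  show sx: "summable (f x)" for x by (rule summable_comparison_test'[OF conjunct1[OF geo_half] b])
  show "0 \<le> suminf (f x)" by (rule suminf_nonneg[OF sx]) (use nn in blast)
  have "suminf (f x) \<le> (\<Sum>n. (1/2::real)^n / 2)"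
    by (rule suminf_le) (use b nn sx geo_half in auto)
  then show "suminf (f x) \<le> 1" using geo_half by simp
  have e: "f x (Suc n) = f (T x) n / 2" for n
    unfolding f_def by (simp add: funpow_Suc_right del: funpow.simps)
  have "(\<Sum>n. f x (Suc n)) = suminf (f x) - f x 0" by (rule suminf_split_head[OF sx])
  moreover have "(\<Sum>n. f x (Suc n)) = suminf (f (T x)) / 2"
    unfolding e by (rule suminf_divide[OF sx])
  moreover have "f x 0 = (if x \<in> Bs then 1 else 0)/2" unfolding f_def by simp
  ultimately show "suminf (f x) = (if x \<in> Bs then 1 else 0)/2 + suminf (f (T x))/2" by (simp add: field_simps)
qed

definition psum :: "(nat \<Rightarrow> real) \<Rightarrow> nat \<Rightarrow> real" where
  "psum f i = (\<Sum>j<i. f j)"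

lemma psum_Suc: "psum f (Suc i) = psum f i + f i"
  unfolding psum_def by simp

lemma psum_0: "psum f 0 = 0" unfolding psum_def by simp

lemma psum_mono: assumes "\<forall>j<m. f j > 0" "i \<le> k" "k \<le> m" shows "psum f i \<le> psum f k"
proof -
  have "0 \<le> f j" if "j < k" for j using assms that by (meson less_le_trans less_imp_le)
  then show ?thesis unfolding psum_def by (intro sum_mono2) (use assms in auto)
qed

lemma seg: fixes s :: "nat \<Rightarrow> real" shows "s 0 \<le> x \<Longrightarrow> x < s n \<Longrightarrow> \<exists>i<n. s i \<le> x \<and> x < s (Suc i)"
proof (induction n)
  case 0 then show ?case by simp
next
  case (Suc n)
  show ?case
  proof (cases "x < s n")
    case True then show ?thesis using Suc by (meson less_SucI)
  next
    case False then show ?thesis using Suc by auto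
  qed
qed

lemma A_eq: "ds_A a i = {psum a i ..< psum a (Suc i)}"
  by (simp add: ds_A_def psum_def lessThan_Suc_atMost[symmetric])

lemma B_eq: "ds_B m a b i = {psum a m + psum b i ..< psum a m + psum b (Suc i)}"
  by (simp add: ds_B_def psum_def lessThan_Suc_atMost[symmetric])

lemma tail_eq: "i \<le> m \<Longrightarrow> (\<Sum>j\<in>{i..<m}. a j) = psum a m - psum a i"
  unfolding psum_def using sum_diff_nat_ivl[of 0 i m a] by (simp add: atLeast0LessThan)


context
  fixes m :: nat and a b :: "nat \<Rightarrow> real"
  assumes m1: "m \<ge> 1" and apos: "\<forall>i<m. a i > 0" and bpos: "\<forall>i<m. b i > 0"
    and tot: "(\<Sum>i<m. a i) + (\<Sum>i<m. b i) = 1"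
begin

lemma tot': "psum a m + psum b m = 1" using tot unfolding psum_def .

lemma pa: "i \<le> k \<Longrightarrow> k \<le> m \<Longrightarrow> psum a i \<le> psum a k" using psum_mono[OF apos] by blast
lemma pb: "i \<le> k \<Longrightarrow> k \<le> m \<Longrightarrow> psum b i \<le> psum b k" using psum_mono[OF bpos] by blast
lemma pa0: "i \<le> m \<Longrightarrow> 0 \<le> psum a i" using pa[of 0 i] psum_0 by simp
lemma pb0: "i \<le> m \<Longrightarrow> 0 \<le> psum b i" using pb[of 0 i] psum_0 by simp

lemma T_A: assumes im: "i < m" and x1: "psum a i \<le> x" and x2: "x < psum a (Suc i)"
  shows "ds_T m a b x = x + psum b (Suc i)"
proof -
  have ind1: "indicator (ds_A a k) x = (if k = i then 1 else 0 :: real)" if km: "k < m" for k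
  proof (cases "k = i")
    case True then show ?thesis using x1 x2 by (simp add: A_eq)
  next
    case False
    have "x \<notin> ds_A a k"
    proof (cases "k < i")
      case True
      then have "psum a (Suc k) \<le> psum a i" using pa[of "Suc k" i] im by simp
      then show ?thesis using x1 by (simp add: A_eq)
    next
      case False
      then have "Suc i \<le> k" using \<open>k \<noteq> i\<close> by simp
      then have "psum a (Suc i) \<le> psum a k" using pa[of "Suc i" k] km by simp
      then show ?thesis using x2 by (simp add: A_eq)
    qed
    then show ?thesis using False by simp
  qed
  have ind2: "indicator (ds_B m a b k) x = (0::real)" if km: "k < m" for k
  proof -
    have "psum a (Suc i) \<le> psum a m" using pa[of "Suc i" m] im by simp
    moreover have "0 \<le> psum b k" using pb0[of k] km by simp
    ultimately show ?thesis using x2 by (simp add: B_eq)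
  qed
  have s1: "(\<Sum>k<m. indicator (ds_A a k) x * (\<Sum>j\<le>k. b j)) = (\<Sum>k<m. if k = i then (\<Sum>j\<le>k. b j) else 0)"
    by (rule sum.cong) (simp_all add: ind1)
  also have "\<dots> = (\<Sum>j\<le>i. b j)" using im by simp
  also have "\<dots> = psum b (Suc i)" by (simp add: psum_def lessThan_Suc_atMost)
  finally have s1': "(\<Sum>k<m. indicator (ds_A a k) x * (\<Sum>j\<le>k. b j)) = psum b (Suc i)" .
  have s2: "(\<Sum>k<m. indicator (ds_B m a b k) x * (\<Sum>j\<in>{k..<m}. a j)) = 0"
    by (rule sum.neutral) (simp add: ind2)
  show ?thesis unfolding ds_T_def s1' s2 by simp
qed

lemma T_B: assumes im: "i < m" and x1: "psum a m + psum b i \<le> x" and x2: "x < psum a m + psum b (Suc i)"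
  shows "ds_T m a b x = x + psum a i - psum a m"
proof -
  have ind2: "indicator (ds_B m a b k) x = (if k = i then 1 else 0 :: real)" if km: "k < m" for k
  proof (cases "k = i")
    case True then show ?thesis using x1 x2 by (simp add: B_eq)
  next
    case False
    have "x \<notin> ds_B m a b k"
    proof (cases "k < i")
      case True
      then have "psum b (Suc k) \<le> psum b i" using pb[of "Suc k" i] im by simp
      then show ?thesis using x1 by (simp add: B_eq)
    next
      case False
      then have "Suc i \<le> k" using \<open>k \<noteq> i\<close> by simp
      then have "psum b (Suc i) \<le> psum b k" using pb[of "Suc i" k] km by simp
      then show ?thesis using x2 by (simp add: B_eq)
    qed
    then show ?thesis using False by simp
  qed
  have ind1: "indicator (ds_A a k) x = (0::real)" if km: "k < m" for k
  proof -
    have "psum a (Suc k) \<le> psum a m" using pa[of "Suc k" m] km by simp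
    moreover have "0 \<le> psum b i" using pb0[of i] im by simp
    ultimately show ?thesis using x1 by (simp add: A_eq)
  qed
  have s2: "(\<Sum>k<m. indicator (ds_B m a b k) x * (\<Sum>j\<in>{k..<m}. a j)) = (\<Sum>k<m. if k = i then (\<Sum>j\<in>{k..<m}. a j) else 0)"
    by (rule sum.cong) (simp_all add: ind2)
  also have "\<dots> = (\<Sum>j\<in>{i..<m}. a j)" using im by simp
  also have "\<dots> = psum a m - psum a i" using tail_eq[of i m a] im by simp
  finally have s2': "(\<Sum>k<m. indicator (ds_B m a b k) x * (\<Sum>j\<in>{k..<m}. a j)) = psum a m - psum a i" .
  have s1: "(\<Sum>k<m. indicator (ds_A a k) x * (\<Sum>j\<le>k. b j)) = 0"
    by (rule sum.neutral) (simp add: ind1)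
  show ?thesis unfolding ds_T_def s1 s2' by simp
qed

lemma master: assumes "x \<in> {0..<1}"
  shows "(x < psum a m \<and> (\<exists>i<m. psum a i \<le> x \<and> x < psum a (Suc i) \<and> ds_T m a b x = x + psum b (Suc i)))
       \<or> (psum a m \<le> x \<and> (\<exists>i<m. psum a m + psum b i \<le> x \<and> x < psum a m + psum b (Suc i)
            \<and> ds_T m a b x = x + psum a i - psum a m))"
proof (cases "x < psum a m")
  case True
  obtain i where "i < m" "psum a i \<le> x" "x < psum a (Suc i)"
    using seg[of "psum a" x m] True assms psum_0 by auto
  then show ?thesis using T_A True by blast
next
  case False
  obtain i where "i < m" "psum a m + psum b i \<le> x" "x < psum a m + psum b (Suc i)"
    using seg[of "\<lambda>i. psum a m + psum b i" x m] False assms psum_0 tot' by auto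
  then show ?thesis using T_B False by auto
qed

lemma Bun: "ds_Bunion m a b = {psum a m ..< 1}"
proof
  show "ds_Bunion m a b \<subseteq> {psum a m ..< 1}"
  proof
    fix x assume "x \<in> ds_Bunion m a b"
    then obtain i where im: "i < m" and x: "x \<in> ds_B m a b i" unfolding ds_Bunion_def by blast
    have "0 \<le> psum b i" using pb0[of i] im by simp
    moreover have "psum b (Suc i) \<le> psum b m" using pb[of "Suc i" m] im by simp
    ultimately show "x \<in> {psum a m ..< 1}" using x tot' by (auto simp: B_eq)
  qed
next
  show "{psum a m ..< 1} \<subseteq> ds_Bunion m a b"
  proof
    fix x assume x: "x \<in> {psum a m ..< (1::real)}"
    obtain i where "i < m" "psum a m + psum b i \<le> x" "x < psum a m + psum b (Suc i)"
      using seg[of "\<lambda>i. psum a m + psum b i" x m] x psum_0 tot' by auto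
    then show "x \<in> ds_Bunion m a b" unfolding ds_Bunion_def by (auto simp: B_eq)
  qed
qed

lemma dl: "0 < Min (a ` {..<m} \<union> b ` {..<m})"
  "j < m \<Longrightarrow> Min (a ` {..<m} \<union> b ` {..<m}) \<le> a j"
  "j < m \<Longrightarrow> Min (a ` {..<m} \<union> b ` {..<m}) \<le> b j"
proof -
  have fin: "finite (a ` {..<m} \<union> b ` {..<m})" by simp
  have "0 \<in> {..<m}" using m1 by simp
  then have ne: "a ` {..<m} \<union> b ` {..<m} \<noteq> {}" by blast
  show "0 < Min (a ` {..<m} \<union> b ` {..<m})" using apos bpos by (subst Min_gr_iff[OF fin ne]) auto
  show "j < m \<Longrightarrow> Min (a ` {..<m} \<union> b ` {..<m}) \<le> a j" by (rule Min_le[OF fin]) auto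
  show "j < m \<Longrightarrow> Min (a ` {..<m} \<union> b ` {..<m}) \<le> b j" by (rule Min_le[OF fin]) auto
qed

lemma TX: assumes x: "x \<in> {0..<1}" shows "ds_T m a b x \<in> {0..<1}"
  using master[OF x]
proof
  assume "x < psum a m \<and> (\<exists>i<m. psum a i \<le> x \<and> x < psum a (Suc i) \<and> ds_T m a b x = x + psum b (Suc i))"
  then obtain i where i: "i < m" "psum a i \<le> x" "x < psum a (Suc i)" "ds_T m a b x = x + psum b (Suc i)" by blast
  have "0 \<le> psum b (Suc i)" using pb0[of "Suc i"] i by simp
  moreover have "psum a (Suc i) \<le> psum a m" "psum b (Suc i) \<le> psum b m" using pa[of "Suc i" m] pb[of "Suc i" m] i by auto
  ultimately have "0 \<le> ds_T m a b x \<and> ds_T m a b x < 1" using i x tot' by simp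
  then show ?thesis by simp
next
  assume "psum a m \<le> x \<and> (\<exists>i<m. psum a m + psum b i \<le> x \<and> x < psum a m + psum b (Suc i)
            \<and> ds_T m a b x = x + psum a i - psum a m)"
  then obtain i where i: "i < m" "psum a m + psum b i \<le> x" "x < psum a m + psum b (Suc i)"
     "ds_T m a b x = x + psum a i - psum a m" by blast
  have "0 \<le> psum b i" "0 \<le> psum a i" using pb0[of i] pa0[of i] i by auto
  moreover have "psum a i \<le> psum a m" "psum b (Suc i) \<le> psum b m" using pa[of i m] pb[of "Suc i" m] i by auto
  ultimately have "0 \<le> ds_T m a b x \<and> ds_T m a b x < 1" using i x tot' by simp
  then show ?thesis by simp
qed

lemma Tinj_AB: assumes i: "i < m" "psum a i \<le> x" "x < psum a (Suc i)" "ds_T m a b x = x + psum b (Suc i)"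
  and k: "k < m" "psum a m + psum b k \<le> y" "y < psum a m + psum b (Suc k)" "ds_T m a b y = y + psum a k - psum a m"
  shows "ds_T m a b x \<noteq> ds_T m a b y"
proof (cases "k \<le> i")
  case True
  have "psum a k \<le> psum a i" "psum b (Suc k) \<le> psum b (Suc i)" using pa[of k i] pb[of "Suc k" "Suc i"] True i by auto
  then show ?thesis using i k by linarith
next
  case False
  have "psum a (Suc i) \<le> psum a k" "psum b (Suc i) \<le> psum b k" using pa[of "Suc i" k] pb[of "Suc i" k] False k by auto
  then show ?thesis using i k by linarith
qed

lemma Tinj: "inj_on (ds_T m a b) {0..<1}"
proof (rule inj_onI)
  fix x y assume x: "x \<in> {0..<(1::real)}" and y: "y \<in> {0..<(1::real)}" and e: "ds_T m a b x = ds_T m a b y"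
  show "x = y"
    using master[OF x]
  proof
    assume "x < psum a m \<and> (\<exists>i<m. psum a i \<le> x \<and> x < psum a (Suc i) \<and> ds_T m a b x = x + psum b (Suc i))"
    then obtain i where i: "i < m" "psum a i \<le> x" "x < psum a (Suc i)" "ds_T m a b x = x + psum b (Suc i)" by blast
    show "x = y" using master[OF y]
    proof
      assume "y < psum a m \<and> (\<exists>i<m. psum a i \<le> y \<and> y < psum a (Suc i) \<and> ds_T m a b y = y + psum b (Suc i))"
      then obtain k where k: "k < m" "psum a k \<le> y" "y < psum a (Suc k)" "ds_T m a b y = y + psum b (Suc k)" by blast
      consider "i = k" | "i < k" | "k < i" by linarith
      then show "x = y"
      proof cases
        case 1
        have "ds_T m a b x - x = ds_T m a b y - y" using i(4) k(4) 1 by simp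
        then show ?thesis using e by linarith
      next
        case 2
        have "psum a (Suc i) \<le> psum a k" "psum b (Suc i) \<le> psum b (Suc k)" using pa[of "Suc i" k] pb[of "Suc i" "Suc k"] 2 k by auto
        then show ?thesis using i k e by linarith
      next
        case 3
        have "psum a (Suc k) \<le> psum a i" "psum b (Suc k) \<le> psum b (Suc i)" using pa[of "Suc k" i] pb[of "Suc k" "Suc i"] 3 i by auto
        then show ?thesis using i k e by linarith
      qed
    next
      assume "psum a m \<le> y \<and> (\<exists>i<m. psum a m + psum b i \<le> y \<and> y < psum a m + psum b (Suc i)
            \<and> ds_T m a b y = y + psum a i - psum a m)"
      then obtain k where k: "k < m" "psum a m + psum b k \<le> y" "y < psum a m + psum b (Suc k)"
        "ds_T m a b y = y + psum a k - psum a m" by blast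
      show "x = y" using Tinj_AB[OF i k] e by simp
    qed
  next
    assume "psum a m \<le> x \<and> (\<exists>i<m. psum a m + psum b i \<le> x \<and> x < psum a m + psum b (Suc i)
            \<and> ds_T m a b x = x + psum a i - psum a m)"
    then obtain i where i: "i < m" "psum a m + psum b i \<le> x" "x < psum a m + psum b (Suc i)"
      "ds_T m a b x = x + psum a i - psum a m" by blast
    show "x = y" using master[OF y]
    proof
      assume "y < psum a m \<and> (\<exists>i<m. psum a i \<le> y \<and> y < psum a (Suc i) \<and> ds_T m a b y = y + psum b (Suc i))"
      then obtain k where k: "k < m" "psum a k \<le> y" "y < psum a (Suc k)" "ds_T m a b y = y + psum b (Suc k)" by blast
      show "x = y" using Tinj_AB[OF k i] e by simp
    next
      assume "psum a m \<le> y \<and> (\<exists>i<m. psum a m + psum b i \<le> y \<and> y < psum a m + psum b (Suc i)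
            \<and> ds_T m a b y = y + psum a i - psum a m)"
      then obtain k where k: "k < m" "psum a m + psum b k \<le> y" "y < psum a m + psum b (Suc k)"
        "ds_T m a b y = y + psum a k - psum a m" by blast
      consider "i = k" | "i < k" | "k < i" by linarith
      then show "x = y"
      proof cases
        case 1
        have "ds_T m a b x - x = ds_T m a b y - y" using i(4) k(4) 1 by simp
        then show ?thesis using e by linarith
      next
        case 2
        have "psum a (Suc i) \<le> psum a k" "psum b (Suc i) \<le> psum b k" using pa[of "Suc i" k] pb[of "Suc i" k] 2 k by auto
        moreover have "a i > 0" using apos i by simp
        ultimately show ?thesis using i k e psum_Suc[of a i] by linarith
      next
        case 3
        have "psum a (Suc k) \<le> psum a i" "psum b (Suc k) \<le> psum b i" using pa[of "Suc k" i] pb[of "Suc k" i] 3 i by auto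
        moreover have "a k > 0" using apos k by simp
        ultimately show ?thesis using i k e psum_Suc[of a k] by linarith
      qed
    qed
  qed
qed

lemma alpha_le1: "psum a m \<le> 1" using tot' pb0[of m] by simp

lemma Bdown: assumes x: "x \<in> {0..<1}" and xB: "x \<in> ds_Bunion m a b"
  shows "ds_T m a b x \<le> x - Min (a ` {..<m} \<union> b ` {..<m})"
proof -
  have xa: "psum a m \<le> x" using xB Bun by simp
  then obtain i where i: "i < m" "ds_T m a b x = x + psum a i - psum a m" using master[OF x] by auto
  have "psum a (Suc i) \<le> psum a m" using pa[of "Suc i" m] i by simp
  moreover have "Min (a ` {..<m} \<union> b ` {..<m}) \<le> a i" using dl(2) i by simp
  ultimately show ?thesis using i psum_Suc[of a i] by linarith
qed

lemma sigmono: assumes x: "x \<in> {0..<1}" and y: "y \<in> {0..<1}" and xy: "x \<le> y"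
  and side: "x \<in> ds_Bunion m a b \<longleftrightarrow> y \<in> ds_Bunion m a b"
  shows "ds_T m a b x - x \<le> ds_T m a b y - y \<and> (ds_T m a b x - x = ds_T m a b y - y
     \<or> ds_T m a b x - x + Min (a ` {..<m} \<union> b ` {..<m}) \<le> ds_T m a b y - y)"
proof (cases "x < psum a m")
  case True
  then have ya: "y < psum a m" using side Bun x y by auto
  obtain i where i: "i < m" "psum a i \<le> x" "x < psum a (Suc i)" "ds_T m a b x = x + psum b (Suc i)"
    using master[OF x] True by auto
  obtain k where k: "k < m" "psum a k \<le> y" "y < psum a (Suc k)" "ds_T m a b y = y + psum b (Suc k)"
    using master[OF y] ya by auto
  have ik: "i \<le> k"
  proof (rule ccontr)
    assume "\<not> i \<le> k"
    then have "psum a (Suc k) \<le> psum a i" using pa[of "Suc k" i] i by simp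
    then show False using i k xy by linarith
  qed
  show ?thesis
  proof (cases "i = k")
    case True then show ?thesis using i k by simp
  next
    case False
    then have "psum b (Suc i) \<le> psum b k" using pb[of "Suc i" k] ik k by simp
    moreover have "Min (a ` {..<m} \<union> b ` {..<m}) \<le> b k" using dl(3) k by simp
    moreover have "ds_T m a b x - x = psum b (Suc i)" "ds_T m a b y - y = psum b k + b k"
      using i k psum_Suc[of b k] by simp_all
    ultimately have c1: "ds_T m a b x - x \<le> ds_T m a b y - y"
      and c2: "ds_T m a b x - x + Min (a ` {..<m} \<union> b ` {..<m}) \<le> ds_T m a b y - y"
      using dl(1) by linarith+
    then show ?thesis by blast
  qed
next
  case False
  then have ya: "\<not> y < psum a m" using side Bun x y by auto
  obtain i where i: "i < m" "psum a m + psum b i \<le> x" "x < psum a m + psum b (Suc i)"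
    "ds_T m a b x = x + psum a i - psum a m"
    using master[OF x] False by auto
  obtain k where k: "k < m" "psum a m + psum b k \<le> y" "y < psum a m + psum b (Suc k)"
    "ds_T m a b y = y + psum a k - psum a m"
    using master[OF y] ya by auto
  have ik: "i \<le> k"
  proof (rule ccontr)
    assume "\<not> i \<le> k"
    then have "psum b (Suc k) \<le> psum b i" using pb[of "Suc k" i] i by simp
    then show False using i k xy by linarith
  qed
  show ?thesis
  proof (cases "i = k")
    case True then show ?thesis using i k by simp
  next
    case False
    then have "psum a (Suc i) \<le> psum a k" using pa[of "Suc i" k] ik k by simp
    moreover have "Min (a ` {..<m} \<union> b ` {..<m}) \<le> a i" using dl(2) i by simp
    moreover have "ds_T m a b x - x = psum a i - psum a m" "ds_T m a b y - y = psum a k - psum a m"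
      using i k by simp_all
    moreover have "psum a (Suc i) = psum a i + a i" by (rule psum_Suc)
    ultimately have c1: "ds_T m a b x - x \<le> ds_T m a b y - y"
      and c2: "ds_T m a b x - x + Min (a ` {..<m} \<union> b ` {..<m}) \<le> ds_T m a b y - y"
      using dl(1) by linarith+
    then show ?thesis by blast
  qed
qed

lemma pcs: assumes x: "x \<in> {0..<1}"
  shows "\<exists>e e'. e \<in> psum a ` {..<m} \<union> (\<lambda>i. psum a m + psum b i) ` {..<m} \<and> e \<le> x \<and> x < e' \<and>
      (\<forall>u. e \<le> u \<and> u < e' \<longrightarrow> u \<in> {0..<1} \<and> (u \<in> ds_Bunion m a b \<longleftrightarrow> x \<in> ds_Bunion m a b)
          \<and> ds_T m a b u - u = ds_T m a b x - x)"
proof (cases "x < psum a m")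
  case True
  obtain i where i: "i < m" "psum a i \<le> x" "x < psum a (Suc i)" "ds_T m a b x = x + psum b (Suc i)"
    using master[OF x] True by auto
  have h1: "psum a (Suc i) \<le> psum a m" using pa[of "Suc i" m] i by simp
  have h0: "0 \<le> psum a i" using pa0[of i] i by simp
  have "\<forall>u. psum a i \<le> u \<and> u < psum a (Suc i) \<longrightarrow> u \<in> {0..<1} \<and> (u \<in> ds_Bunion m a b \<longleftrightarrow> x \<in> ds_Bunion m a b)
          \<and> ds_T m a b u - u = ds_T m a b x - x"
  proof (intro allI impI)
    fix u assume u: "psum a i \<le> u \<and> u < psum a (Suc i)"
    have "u \<in> {0..<1}" using u h0 h1 alpha_le1 by auto
    moreover have "(u \<in> ds_Bunion m a b \<longleftrightarrow> x \<in> ds_Bunion m a b)" using u h1 True Bun by auto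
    moreover have "ds_T m a b u = u + psum b (Suc i)" using T_A[OF i(1)] u by blast
    ultimately show "u \<in> {0..<1} \<and> (u \<in> ds_Bunion m a b \<longleftrightarrow> x \<in> ds_Bunion m a b)
          \<and> ds_T m a b u - u = ds_T m a b x - x" using i by simp
  qed
  moreover have "psum a i \<in> psum a ` {..<m} \<union> (\<lambda>i. psum a m + psum b i) ` {..<m}" using i by blast
  ultimately show ?thesis using i by blast
next
  case False
  obtain i where i: "i < m" "psum a m + psum b i \<le> x" "x < psum a m + psum b (Suc i)"
    "ds_T m a b x = x + psum a i - psum a m"
    using master[OF x] False by auto
  have h1: "psum b (Suc i) \<le> psum b m" using pb[of "Suc i" m] i by simp
  have h0: "0 \<le> psum b i" using pb0[of i] i by simp
  have h2: "0 \<le> psum a m" using pa0[of m] by simp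
  have "\<forall>u. psum a m + psum b i \<le> u \<and> u < psum a m + psum b (Suc i) \<longrightarrow> u \<in> {0..<1} \<and> (u \<in> ds_Bunion m a b \<longleftrightarrow> x \<in> ds_Bunion m a b)
          \<and> ds_T m a b u - u = ds_T m a b x - x"
  proof (intro allI impI)
    fix u assume u: "psum a m + psum b i \<le> u \<and> u < psum a m + psum b (Suc i)"
    have u1: "u \<in> {0..<1}" using u h0 h1 h2 tot' by auto
    moreover have "(u \<in> ds_Bunion m a b \<longleftrightarrow> x \<in> ds_Bunion m a b)" using u u1 h0 False x Bun by auto
    moreover have "ds_T m a b u = u + psum a i - psum a m" using T_B[OF i(1)] u by blast
    ultimately show "u \<in> {0..<1} \<and> (u \<in> ds_Bunion m a b \<longleftrightarrow> x \<in> ds_Bunion m a b)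
          \<and> ds_T m a b u - u = ds_T m a b x - x" using i by simp
  qed
  moreover have "psum a m + psum b i \<in> psum a ` {..<m} \<union> (\<lambda>i. psum a m + psum b i) ` {..<m}" using i by blast
  ultimately show ?thesis using i by blast
qed

lemma dyn_inst: "dyn (ds_T m a b) (ds_Bunion m a b) (ds_H m a b)
   (psum a ` {..<m} \<union> (\<lambda>i. psum a m + psum b i) ` {..<m}) (Min (a ` {..<m} \<union> b ` {..<m}))"
proof (unfold_locales)
  show "\<And>x. x \<in> {0..<1} \<Longrightarrow> ds_T m a b x \<in> {0..<1}" by (rule TX)
  show "inj_on (ds_T m a b) {0..<1}" by (rule Tinj)
  show "\<And>x. ds_H m a b x = (if x \<in> ds_Bunion m a b then 1 else 0) / 2 + ds_H m a b (ds_T m a b x) / 2"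
    unfolding ds_H_def using ser_facts(4) by blast
  show "\<And>x. 0 \<le> ds_H m a b x" unfolding ds_H_def using ser_facts(2) by blast
  show "\<And>x. ds_H m a b x \<le> 1" unfolding ds_H_def using ser_facts(3) by blast
  show "0 < Min (a ` {..<m} \<union> b ` {..<m})" by (rule dl(1))
  show "\<And>x. x \<in> {0..<1} \<Longrightarrow> x \<in> ds_Bunion m a b \<Longrightarrow> ds_T m a b x \<le> x - Min (a ` {..<m} \<union> b ` {..<m})"
    by (rule Bdown)
  show "\<And>x y. x \<in> {0..<1} \<Longrightarrow> y \<in> {0..<1} \<Longrightarrow> x \<le> y \<Longrightarrow> x \<in> ds_Bunion m a b \<Longrightarrow> y \<in> ds_Bunion m a b"
    using Bun by auto
  show "\<And>x y. x \<in> {0..<1} \<Longrightarrow> y \<in> {0..<1} \<Longrightarrow> x \<le> y \<Longrightarrow> (x \<in> ds_Bunion m a b) = (y \<in> ds_Bunion m a b) \<Longrightarrow>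
      ds_T m a b x - x \<le> ds_T m a b y - y \<and> (ds_T m a b x - x = ds_T m a b y - y
     \<or> ds_T m a b x - x + Min (a ` {..<m} \<union> b ` {..<m}) \<le> ds_T m a b y - y)"
    by (rule sigmono)
  show "\<And>x. x \<in> {0..<1} \<Longrightarrow> \<exists>e e'. e \<in> psum a ` {..<m} \<union> (\<lambda>i. psum a m + psum b i) ` {..<m} \<and> e \<le> x \<and> x < e' \<and>
      (\<forall>u. e \<le> u \<and> u < e' \<longrightarrow> u \<in> {0..<1} \<and> (u \<in> ds_Bunion m a b \<longleftrightarrow> x \<in> ds_Bunion m a b)
          \<and> ds_T m a b u - u = ds_T m a b x - x)" by (rule pcs)
  show "finite (psum a ` {..<m} \<union> (\<lambda>i. psum a m + psum b i) ` {..<m})" by simp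
  show "\<And>x y. \<forall>n. ((ds_T m a b ^^ n) x \<in> ds_Bunion m a b) = ((ds_T m a b ^^ n) y \<in> ds_Bunion m a b) \<Longrightarrow>
      ds_H m a b x = ds_H m a b y"
    unfolding ds_H_def indicator_def by simp
qed

end

theorem corollary4:
  fixes m :: nat and a b :: "nat \<Rightarrow> real"
  assumes "m \<ge> 1"
    and "\<forall>i<m. a i > 0" and "\<forall>i<m. b i > 0"
    and "(\<Sum>i<m. a i) + (\<Sum>i<m. b i) = 1"
  shows "mono_on {0..<1} (ds_H m a b)
     \<and> finite {z \<in> {0..<1::real}.
          is_interval ({x \<in> {0..<1}. ds_H m a b x = z})
          \<and> (\<exists>x y. x \<in> {0..<1} \<and> y \<in> {0..<1} \<and> x < y
                   \<and> ds_H m a b x = z \<and> ds_H m a b y = z)}"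
  using dyn.abs_main[OF dyn_inst[OF assms]] .

end
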